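(* Let $d\ge2$ and let $v=(v_1,\dots,v_d)\in\mathbb{R}^d$ satisfy $\sum_j v_j=1$ and $\sum_j v_j^2=d$. Let $v_{\max}=\max_j v_j$, $v_{\min}=\min_j v_j$, $\|v\|_1=\sum_j|v_j|$. Then $$\tfrac12\bigl[v_{\max}(\|v\|_1-1)+|v_{\min}|(\|v\|_1+1)\bigr]\ge d-\sqrt{d+1}+\tfrac2d\sqrt{d+1}-\tfrac2d,$$ with equality if and only if the components of $v$ arranged in nonincreasing order $v^\downarrow$ satisfy $$v^\downarrow_1=\frac{(d-1)\sqrt{d+1}+1}{d},\qquad v^\downarrow_2=\dots=v^\downarrow_d=\frac{1-\sqrt{d+1}}{d}.$$ *)

theory Defs
  imports "HOL-Analysis.Analysis"
begin

end

theory Submission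
  imports Defs
begin

lemma sum_split2:
  fixes f :: "'a::finite \<Rightarrow> real"
  assumes "i \<noteq> j"
  shows "sum f UNIV = f i + f j + sum f (UNIV - {i,j})"
proof -
  have "sum f UNIV = f i + sum f (UNIV - {i})" by (simp add: sum.remove)
  moreover have "sum f (UNIV - {i}) = f j + sum f (UNIV - {i} - {j})"
    using assms by (intro sum.remove) auto
  moreover have "UNIV - {i} - {j} = UNIV - {i,j}" by auto
  ultimately show ?thesis by simp
qed

theorem lemmaS1:
  fixes v :: "real ^ 'n"
  defines "d \<equiv> real CARD('n)"
  defines "vmax \<equiv> Max {v $ j | j. True}"
  defines "vmin \<equiv> Min {v $ j | j. True}"
  defines "n1 \<equiv> (\<Sum>j\<in>UNIV. \<bar>v $ j\<bar>)"
  assumes "CARD('n) \<ge> 2"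
    and "(\<Sum>j\<in>UNIV. v $ j) = 1"
    and "(\<Sum>j\<in>UNIV. (v $ j)^2) = d"
  shows "((vmax * (n1 - 1) + \<bar>vmin\<bar> * (n1 + 1)) / 2
           \<ge> d - sqrt (d + 1) + 2 / d * sqrt (d + 1) - 2 / d)
     \<and> ((vmax * (n1 - 1) + \<bar>vmin\<bar> * (n1 + 1)) / 2
           = d - sqrt (d + 1) + 2 / d * sqrt (d + 1) - 2 / d
         \<longleftrightarrow> (\<exists>i. v $ i = ((d - 1) * sqrt (d + 1) + 1) / d
                  \<and> (\<forall>j. j \<noteq> i \<longrightarrow> v $ j = (1 - sqrt (d + 1)) / d)))"
proof -
  define s where "s = sqrt (d + 1)"
  define B where "B = ((d - 2) * s + 2) / d"
  define E where "E = (vmax * (n1 - 1) + \<bar>vmin\<bar> * (n1 + 1)) / 2"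
  have d2: "d \<ge> 2" using assms(5) unfolding d_def by simp
  have s2: "s^2 = d + 1" proof - have "0 \<le> d + 1" using d2 by linarith thus ?thesis unfolding s_def by simp qed
  have s0: "s \<ge> 0" unfolding s_def using d2 by simp
  have s1: "s > 1" unfolding s_def using d2 by simp
  have TB: "d - sqrt (d + 1) + 2 / d * sqrt (d + 1) - 2 / d = d - B"
    using d2 unfolding B_def s_def by (simp add: field_simps)
  have Seq: "{v $ j | j. True} = range (\<lambda>j. v $ j)" by auto
  have finS: "finite {v $ j | j. True}" unfolding Seq by simp
  have neS: "{v $ j | j. True} \<noteq> {}" by auto
  have ale: "\<And>k. v $ k \<le> vmax" unfolding vmax_def using finS by (intro Max_ge) auto
  have cle: "\<And>k. vmin \<le> v $ k" unfolding vmin_def using finS by (intro Min_le) auto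
  obtain i where vi: "v $ i = vmax" using Max_in[OF finS neS] unfolding vmax_def by auto
  obtain j where vj: "v $ j = vmin" using Min_in[OF finS neS] unfolding vmin_def by auto
  have sum1: "(\<Sum>k\<in>UNIV. v $ k) = 1" using assms(6) .
  have sumsq: "(\<Sum>k\<in>UNIV. (v $ k)^2) = d" using assms(7) .
  have amean: "1 \<le> d * vmax"
  proof -
    have "(\<Sum>k\<in>UNIV. v $ k) \<le> (\<Sum>k\<in>(UNIV::'n set). vmax)" by (intro sum_mono) (rule ale)
    thus ?thesis using sum1 by (simp add: d_def)
  qed
  have ij: "i \<noteq> j"
  proof
    assume "i = j"
    then have all: "\<And>k. v $ k = vmax" using ale cle vi vj by (metis antisym)
    have e1: "d * vmax = 1" using sum1 by (simp add: all d_def)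
    have e2: "d * vmax^2 = d" using sumsq by (simp add: all d_def)
    show False using e1 e2 d2 by (smt (verit) power2_eq_square mult.assoc mult_cancel_left1 mult_le_cancel_right1)
  qed
  have pe: "\<And>k. (v $ k)^2 \<le> ((vmax - vmin) * \<bar>v $ k\<bar> + (vmax + vmin) * v $ k) / 2"
  proof -
    fix k
    show "(v $ k)^2 \<le> ((vmax - vmin) * \<bar>v $ k\<bar> + (vmax + vmin) * v $ k) / 2"
    proof (cases "v $ k \<ge> 0")
      case True
      then show ?thesis using ale[of k] by (simp add: power2_eq_square algebra_simps mult_right_mono)
    next
      case False
      have "v $ k * v $ k \<le> vmin * v $ k" using cle[of k] False by (intro mult_right_mono_neg) auto
      then show ?thesis using False by (simp add: power2_eq_square algebra_simps)
    qed
  qed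
  have dle: "d \<le> ((vmax - vmin) * n1 + (vmax + vmin)) / 2"
  proof -
    have "d = (\<Sum>k\<in>UNIV. (v $ k)^2)" using sumsq by simp
    also have "\<dots> \<le> (\<Sum>k\<in>UNIV. ((vmax - vmin) * \<bar>v $ k\<bar> + (vmax + vmin) * v $ k) / 2)"
      by (intro sum_mono pe)
    also have "\<dots> = ((vmax - vmin) * n1 + (vmax + vmin) * (\<Sum>k\<in>UNIV. v $ k)) / 2"
      unfolding n1_def by (simp add: sum_divide_distrib[symmetric] sum.distrib sum_distrib_left)
    finally show ?thesis using sum1 by simp
  qed
  have n1pos: "n1 \<ge> 0" unfolding n1_def by (intro sum_nonneg) simp
  have Ege: "E \<ge> d - (vmax + vmin)"
  proof -
    have "\<bar>vmin\<bar> * (n1 + 1) \<ge> - vmin * (n1 + 1)" using n1pos by (intro mult_right_mono) auto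
    then show ?thesis using dle unfolding E_def by (simp add: algebra_simps)
  qed
  define R where "R = UNIV - {i, j}"
  have finR: "finite R" by simp
  have cardR: "real (card R) = d - 2"
  proof -
    have "card R = CARD('n) - card {i,j}" unfolding R_def by (rule card_Diff_subset) auto
    moreover have "card {i,j} = 2" using ij by simp
    ultimately show ?thesis using assms(5) unfolding d_def by (simp add: of_nat_diff)
  qed
  have SR: "(\<Sum>k\<in>R. v $ k) = 1 - vmax - vmin"
    using sum_split2[OF ij, of "\<lambda>k. v $ k"] sum1 vi vj unfolding R_def by simp
  have QR: "(\<Sum>k\<in>R. (v $ k)^2) = d - vmax^2 - vmin^2"
    using sum_split2[OF ij, of "\<lambda>k. (v $ k)^2"] sumsq vi vj unfolding R_def by simp
  define \<sigma>1 where "\<sigma>1 = (\<Sum>k\<in>R. (v $ k - vmin) * (vmax - v $ k))"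
  have \<sigma>1eq: "\<sigma>1 = (vmax + vmin) * (1 - vmax - vmin) - (d - vmax^2 - vmin^2) - (d - 2) * (vmax * vmin)"
  proof -
    have "\<sigma>1 = (\<Sum>k\<in>R. (vmax + vmin) * v $ k - (v $ k)^2 - vmax * vmin)"
      unfolding \<sigma>1_def by (rule sum.cong) (auto simp: algebra_simps power2_eq_square)
    also have "\<dots> = (vmax + vmin) * (\<Sum>k\<in>R. v $ k) - (\<Sum>k\<in>R. (v $ k)^2) - real (card R) * (vmax * vmin)"
      by (simp add: sum_subtractf sum_distrib_left)
    finally show ?thesis using SR QR cardR by simp
  qed
  have \<sigma>1pos: "\<sigma>1 \<ge> 0" unfolding \<sigma>1_def
    by (intro sum_nonneg mult_nonneg_nonneg) (use ale cle in auto)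
  define S where "S = 1 - vmax - vmin"
  define \<sigma>2 where "\<sigma>2 = (\<Sum>k\<in>R. ((d - 2) * v $ k - S)^2)"
  have \<sigma>2eq: "\<sigma>2 = (d - 2) * ((d - 2) * (d - vmax^2 - vmin^2) - S^2)"
  proof -
    have "\<sigma>2 = (\<Sum>k\<in>R. (d - 2)^2 * (v $ k)^2 - (2 * (d - 2) * S) * v $ k + S^2)"
      unfolding \<sigma>2_def by (rule sum.cong) (auto simp: algebra_simps power2_eq_square)
    also have "\<dots> = (d - 2)^2 * (\<Sum>k\<in>R. (v $ k)^2) - (2 * (d - 2) * S) * (\<Sum>k\<in>R. v $ k) + real (card R) * S^2"
      by (simp add: sum_subtractf sum.distrib sum_distrib_left)
    finally show ?thesis using SR QR cardR unfolding S_def unfolding power2_eq_square by algebra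
  qed
  have \<sigma>2pos: "\<sigma>2 \<ge> 0" unfolding \<sigma>2_def by (intro sum_nonneg) simp
  define p where "p = vmax + vmin"
  define V where "V = (d - 2) * (d - vmax^2 - vmin^2) - S^2"
  have ident: "d * V + 2 * (d - 2) * \<sigma>1 + (d - 1) * (d * p^2 - 4 * p + 3 * d - d^2) = 0"
    unfolding V_def \<sigma>1eq p_def S_def by (simp add: power2_eq_square algebra_simps)
  have gB: "d * B^2 - 4 * B + 3 * d - d^2 = 0"
  proof -
    have dB: "d * B = (d - 2) * s + 2" unfolding B_def using d2 by simp
    have "d * (d * B^2 - 4 * B + 3 * d - d^2) = (d * B)^2 - 4 * (d * B) + 3 * d^2 - d^3"
      by (simp add: power2_eq_square power3_eq_cube algebra_simps)
    also have "\<dots> = (d - 2)^2 * s^2 + 4 * (d - 2) * s + 4 - 4 * ((d - 2) * s + 2) + 3 * d^2 - d^3"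
      unfolding dB by (simp add: power2_eq_square algebra_simps)
    also have "\<dots> = 0" unfolding s2 by (simp add: power2_eq_square power3_eq_cube algebra_simps)
    finally show ?thesis using d2 by simp
  qed
  have key: "p \<le> B \<and> (p = B \<longrightarrow> (\<forall>k\<in>R. v $ k = vmin))"
  proof (cases "d = 2")
    case True
    then have "card R = 0" using cardR by simp
    then have Re: "R = {}" using finR by simp
    then have "p = 1" using SR unfolding p_def by simp
    moreover have "B = 1" using True unfolding B_def by simp
    ultimately show ?thesis using Re by simp
  next
    case False
    then have dg: "d > 2" using d2 by simp
    have Vpos: "V \<ge> 0" using \<sigma>2pos \<sigma>2eq dg unfolding V_def
      by (simp add: zero_le_mult_iff)
    have g: "d * p^2 - 4 * p + 3 * d - d^2 \<le> 0"
    proof -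
      have "(d - 1) * (d * p^2 - 4 * p + 3 * d - d^2) \<le> 0"
        proof -
          have "0 \<le> d * V" using Vpos dg by simp
          moreover have "0 \<le> 2 * (d - 2) * \<sigma>1" using \<sigma>1pos dg by simp
          ultimately show ?thesis using ident by linarith
        qed
      thus ?thesis using dg by (simp add: mult_le_0_iff)
    qed
    have pB: "p \<le> B"
    proof -
      have "(d * p - 2)^2 \<le> ((d - 2) * s)^2"
        proof -
        have "(d * p - 2)^2 - ((d - 2) * s)^2 = d * (d * p^2 - 4 * p + 3 * d - d^2)"
          using s2 by (simp add: power2_eq_square algebra_simps)
        moreover have "d * (d * p^2 - 4 * p + 3 * d - d^2) \<le> 0" using g dg by (simp add: mult_nonneg_nonpos)
        ultimately show ?thesis by linarith
      qed
      then have "d * p - 2 \<le> (d - 2) * s"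
        by (rule power2_le_imp_le) (use dg s0 in simp)
      thus ?thesis unfolding B_def using dg by (simp add: field_simps)
    qed
    moreover have "p = B \<longrightarrow> (\<forall>k\<in>R. v $ k = vmin)"
    proof (intro impI ballI)
      fix k assume pe: "p = B" and kR: "k \<in> R"
      have "d * V + 2 * (d - 2) * \<sigma>1 = 0" using ident gB pe by simp
      moreover have n1: "0 \<le> d * V" using Vpos dg by simp
      moreover have n2: "0 \<le> 2 * (d - 2) * \<sigma>1" using \<sigma>1pos dg by simp
      ultimately have "d * V = 0" and "2 * (d - 2) * \<sigma>1 = 0" by linarith+
      then have V0: "V = 0" and s10: "\<sigma>1 = 0" using dg by auto
      have "\<sigma>2 = 0" using \<sigma>2eq V0 unfolding V_def by simp
      then have t1: "((d - 2) * v $ k - S)^2 = 0"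
        using kR finR unfolding \<sigma>2_def by (subst (asm) sum_nonneg_eq_0_iff) auto
      have t2: "(v $ k - vmin) * (vmax - v $ k) = 0"
        using s10 kR finR ale cle unfolding \<sigma>1_def
        by (subst (asm) sum_nonneg_eq_0_iff) auto
      show "v $ k = vmin"
      proof (rule ccontr)
        assume "v $ k \<noteq> vmin"
        then have "v $ k = vmax" using t2 by simp
        then have Sa: "S = (d - 2) * vmax" using t1 by simp
        have dB: "d * B = (d - 2) * s + 2" unfolding B_def using dg by simp
        have "(d - 2) * (d * vmax) = d - d * B"
        proof -
          have "(d - 2) * vmax = 1 - B" using Sa pe unfolding S_def p_def by linarith
          then have "d * ((d - 2) * vmax) = d * (1 - B)" by simp
          then show ?thesis by (simp add: algebra_simps)
        qed
        moreover have "(d - 2) * (d * vmax) \<ge> (d - 2)" using amean dg by simp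
        moreover have "(d - 2) * s > 0" using dg s1 by simp
        ultimately show False using dB by linarith
      qed
    qed
    ultimately show ?thesis by blast
  qed
  have ineq: "E \<ge> d - B" using Ege key unfolding p_def by linarith
  show ?thesis
    unfolding E_def[symmetric] TB
  proof (intro conjI ineq iffI)
    assume "E = d - B"
    then have "p = B" using Ege key unfolding p_def by linarith
    then have allR: "\<forall>k\<in>R. v $ k = vmin" using key by blast
    have others: "\<And>k. k \<noteq> i \<Longrightarrow> v $ k = vmin"
    proof -
      fix k assume "k \<noteq> i"
      show "v $ k = vmin"
      proof (cases "k = j")
        case True then show ?thesis using vj by simp
      next
        case False then have "k \<in> R" using \<open>k \<noteq> i\<close> unfolding R_def by simp
        then show ?thesis using allR by simp
      qed
    qed
    have cardi: "real (card (UNIV - {i})) = d - 1"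
      unfolding d_def using assms(5) by (simp add: card_Diff_subset of_nat_diff)
    have sumi: "\<And>f::'n \<Rightarrow> real. sum f UNIV = f i + sum f (UNIV - {i})"
      by (simp add: sum.remove)
    have eq1: "vmax + (d - 1) * vmin = 1"
    proof -
      have "(\<Sum>k\<in>UNIV - {i}. v $ k) = (\<Sum>k\<in>UNIV - {i}. vmin)" by (rule sum.cong) (auto simp: others)
      thus ?thesis using sumi[of "\<lambda>k. v $ k"] sum1 vi cardi by simp
    qed
    have eq2: "vmax^2 + (d - 1) * vmin^2 = d"
    proof -
      have "(\<Sum>k\<in>UNIV - {i}. (v $ k)^2) = (\<Sum>k\<in>UNIV - {i}. vmin^2)" by (rule sum.cong) (auto simp: others)
      thus ?thesis using sumi[of "\<lambda>k. (v $ k)^2"] sumsq vi cardi by simp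
    qed
    have sq: "(d * vmax - 1)^2 = ((d - 1) * s)^2"
    proof -
      have "(d - 1) * vmin = 1 - vmax" using eq1 by simp
      moreover have "(d - 1) * (vmax^2 + (d - 1) * vmin^2) = (d - 1) * d" using eq2 by simp
      moreover have "(d - 1) * (vmax^2 + (d - 1) * vmin^2) = (d - 1) * vmax^2 + ((d - 1) * vmin)^2"
        by (simp add: power2_eq_square algebra_simps)
      ultimately have X: "(d - 1) * vmax^2 + (1 - vmax)^2 = (d - 1) * d" by simp
      have "(d * vmax - 1)^2 = d * ((d - 1) * vmax^2 + (1 - vmax)^2) - d + 1"
        by (simp add: power2_eq_square algebra_simps)
      also have "\<dots> = d * ((d - 1) * d) - d + 1" unfolding X ..
      also have "\<dots> = (d - 1)^2 * (d + 1)" by (simp add: power2_eq_square algebra_simps)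
      also have "\<dots> = ((d - 1) * s)^2" using s2 by (simp add: power_mult_distrib)
      finally show ?thesis .
    qed
    have "d * vmax - 1 = (d - 1) * s"
      using sq amean d2 s0 by (simp add: power2_eq_iff_nonneg)
    then have A: "vmax = ((d - 1) * s + 1) / d" using d2 by (simp add: field_simps)
    have C: "vmin = (1 - s) / d"
    proof -
      have "(d - 1) * vmin = 1 - vmax" using eq1 by simp
      then have "(d - 1) * (d * vmin) = (d - 1) * (1 - s)" using A d2 by (simp add: field_simps)
      then have "d * vmin = 1 - s" using d2 by simp
      thus ?thesis using d2 by (simp add: field_simps)
    qed
    show "\<exists>i. v $ i = ((d - 1) * sqrt (d + 1) + 1) / d \<and> (\<forall>j. j \<noteq> i \<longrightarrow> v $ j = (1 - sqrt (d + 1)) / d)"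
      using vi A C others unfolding s_def by auto
  next
    assume "\<exists>i. v $ i = ((d - 1) * sqrt (d + 1) + 1) / d \<and> (\<forall>j. j \<noteq> i \<longrightarrow> v $ j = (1 - sqrt (d + 1)) / d)"
    then obtain i0 where h1: "v $ i0 = ((d - 1) * s + 1) / d"
      and h2: "\<And>j. j \<noteq> i0 \<Longrightarrow> v $ j = (1 - s) / d" unfolding s_def by auto
    define A where "A = ((d - 1) * s + 1) / d"
    define C where "C = (1 - s) / d"
    have AmC: "A - C = s" unfolding A_def C_def using d2 by (simp add: field_simps)
    then have CA: "C < A" using s1 by simp
    have C0: "C < 0" unfolding C_def using d2 s1 by (simp add: field_simps)
    obtain j0 where j0: "j0 \<noteq> i0"
    proof -
      have "\<exists>x. x \<noteq> i0"
      proof (rule ccontr)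
        assume "\<not> (\<exists>x. x \<noteq> i0)"
        then have "(UNIV :: 'n set) = {i0}" by auto
        then have "CARD('n) = card {i0}" by (metis) then have "CARD('n) = 1" by simp
        thus False using assms(5) by simp
      qed
      thus ?thesis using that by blast
    qed
    have set: "{v $ j | j. True} = {A, C}"
    proof (rule set_eqI, rule iffI)
      fix x assume "x \<in> {v $ j | j. True}"
      then obtain k where "x = v $ k" by auto
      then show "x \<in> {A, C}" using h1 h2 unfolding A_def C_def by (cases "k = i0") auto
    next
      fix x assume "x \<in> {A, C}"
      then have "x = v $ i0 \<or> x = v $ j0" using h1 h2[OF j0] unfolding A_def C_def by auto
      then show "x \<in> {v $ j | j. True}" by blast
    qed
    have vmaxA: "vmax = A" unfolding vmax_def set using CA by simp
    have vminC: "vmin = C" unfolding vmin_def set using CA by simp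
    have cardi: "real (card (UNIV - {i0})) = d - 1"
      unfolding d_def using assms(5) by (simp add: card_Diff_subset of_nat_diff)
    have "n1 = \<bar>A\<bar> + (\<Sum>k\<in>UNIV - {i0}. \<bar>v $ k\<bar>)"
      unfolding n1_def using h1 unfolding A_def by (simp add: sum.remove[of UNIV i0])
    also have "(\<Sum>k\<in>UNIV - {i0}. \<bar>v $ k\<bar>) = (\<Sum>k\<in>UNIV - {i0}. - C)"
      by (rule sum.cong) (use C0 in \<open>auto simp: h2 C_def[symmetric]\<close>)
    moreover have "A > 0" proof - have "1 * s \<le> d * s" using d2 s1 by (intro mult_right_mono) auto then have "(d - 1) * s + 1 > 0" by (simp add: algebra_simps) thus ?thesis unfolding A_def using d2 by simp qed
    ultimately have n1e: "n1 = A - (d - 1) * C" using cardi CA C0 by simp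
    have "E = (A * (n1 - 1) - C * (n1 + 1)) / 2" unfolding E_def vmaxA vminC using C0 by simp
    also have "\<dots> = ((A - C) * n1 - (A + C)) / 2" by (simp add: algebra_simps)
    finally have E1: "E = (s * n1 - (A + C)) / 2" unfolding AmC .
    have dn1: "d * n1 = 2 * (d - 1) * s + 2 - d"
      unfolding n1e A_def C_def using d2 by (simp add: field_simps; simp add: algebra_simps)
    have dAC: "d * (A + C) = (d - 2) * s + 2"
      unfolding A_def C_def using d2 by (simp add: field_simps; simp add: algebra_simps)
    have "d * E = (s * (d * n1) - d * (A + C)) / 2" unfolding E1 by (simp add: algebra_simps)
    also have "\<dots> = (2 * (d - 1) * s^2 + (2 - d) * s - ((d - 2) * s + 2)) / 2"
      unfolding dn1 dAC by (simp add: power2_eq_square algebra_simps)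
    also have "\<dots> = d * d - (d - 2) * s - 2" unfolding s2 by (simp add: field_simps; simp add: algebra_simps)
    also have "\<dots> = d * (d - B)" unfolding B_def using d2 by (simp add: field_simps)
    finally show "E = d - B" using d2 by simp
  qed
qed

end
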